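(* Under the standing setting below, take $\rho(x,y)=\|\nabla h(x,y)\|^2$, let $\alpha>0$, $C_0>0$, and let $(x_0,y_0)$ satisfy $h(x_0,y_0)\le \alpha^2 C_0$. Let $\gamma>0$ satisfy $\gamma\le\min\{\alpha,\frac{1}{L_f+\alpha L_h}\}$ and let $\{(x_k,y_k,\lambda_k)\}_{k\ge0}$ be generated by the Algorithm. Then for every integer $K\ge1$, $$\frac1K\sum_{k=0}^{K-1}\big(\|\Delta_k^x\|^2+\|\Delta_k^y\|^2\big)\le \frac{4(f_0+\alpha^3C_0-\bar f)}{\gamma K}+\frac{2\alpha C_0}{\gamma L_h K}+2\alpha^2L_hC_f^2,$$ and $$\frac1K\sum_{k=0}^{K-1}\big(\|\nabla_x h_k\|^2+\|\nabla_y h_k\|^2\big)\le \frac{2\alpha C_0}{\gamma K}+\frac{2L_h(f_0+\alpha^3C_0-\bar f)}{\gamma K}+\alpha^2L_h^2C_f^2,$$ where $f_0=f(x_0,y_0)$.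
   Context: Standing setting. $f,g:\mathbb{R}^n\times\mathbb{R}^m\to\mathbb{R}$. $f$ is continuously differentiable, $\bar f:=\inf_{(x,y)}f(x,y)>-\infty$, $\nabla f$ is $L_f$-Lipschitz on $\mathbb{R}^{n+m}$, and $\|\nabla f(x,y)\|\le C_f$ for all $(x,y)$. $g$ is twice continuously differentiable, and $h(x,y):=\|\nabla_y g(x,y)\|^2$ is continuously differentiable with $\nabla h$ being $L_h$-Lipschitz ($L_h>0$). Write $\nabla h=(\nabla_x h,\nabla_y h)$ and, for a sequence $(x_k,y_k)$, $f_k=f(x_k,y_k)$, $h_k=h(x_k,y_k)$, $\nabla_x f_k=\nabla_x f(x_k,y_k)$, etc. Given a function $\rho:\mathbb{R}^n\times\mathbb{R}^m\to\mathbb{R}_{\ge0}$, parameters $\alpha,\gamma>0$ and a starting point $(x_0,y_0)$, the Algorithm iterates for $k\ge0$: $$\lambda_k=\frac{\big[-\nabla_x h_k^\top\nabla_x f_k-\nabla_y h_k^\top\nabla_y f_k+\alpha\rho(x_k,y_k)\big]_+}{\|\nabla_x h_k\|^2+\|\nabla_y h_k\|^2}\ \text{ if }\nabla h_k\neq0,\qquad \lambda_k=0\ \text{ if }\nabla h_k=0,$$ where $[t]_+=\max\{0,t\}$; then $\Delta_k^x=-\nabla_x f_k-\lambda_k\nabla_x h_k$, $\Delta_k^y=-\nabla_y f_k-\lambda_k\nabla_y h_k$, $x_{k+1}=x_k+\gamma\Delta_k^x$, $y_{k+1}=y_k+\gamma\Delta_k^y$. (Equivalently, $(\Delta_k^x,\Delta_k^y)$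 and $\lambda_k$ are the primal solution and multiplier of the QP $\min_{\Delta^x,\Delta^y}\frac12\|\Delta^x+\nabla_xf_k\|^2+\frac12\|\Delta^y+\nabla_yf_k\|^2$ s.t. $\nabla_xh_k^\top\Delta^x+\nabla_yh_k^\top\Delta^y+\alpha\rho(x_k,y_k)\le0$.) *)

theory Defs
  imports "HOL-Analysis.Analysis"
begin

text \<open>Points (x,y) are pairs in 'a \<times> 'b with 'a, 'b Euclidean spaces (R^n, R^m).
  Gradients are elements of 'a \<times> 'b; fst/snd give the x- and y-partial gradients.\<close>

text \<open>Multiplier lambda_k, given gf = grad f(x_k,y_k), gh = grad h(x_k,y_k), alpha, rho_k.\<close>
definition alg_lambda :: "('a::euclidean_space \<times> 'b::euclidean_space) \<Rightarrow> ('a \<times> 'b) \<Rightarrow> real \<Rightarrow> real \<Rightarrow> real" where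
  "alg_lambda gf gh \<alpha> r =
     (if gh = 0 then 0
      else max 0 (- (fst gh \<bullet> fst gf) - (snd gh \<bullet> snd gf) + \<alpha> * r)
             / (norm (fst gh) ^ 2 + norm (snd gh) ^ 2))"

definition alg_dx :: "('a::euclidean_space \<times> 'b::euclidean_space) \<Rightarrow> ('a \<times> 'b) \<Rightarrow> real \<Rightarrow> real \<Rightarrow> 'a" where
  "alg_dx gf gh \<alpha> r = - fst gf - alg_lambda gf gh \<alpha> r *\<^sub>R fst gh"

definition alg_dy :: "('a::euclidean_space \<times> 'b::euclidean_space) \<Rightarrow> ('a \<times> 'b) \<Rightarrow> real \<Rightarrow> real \<Rightarrow> 'b" where
  "alg_dy gf gh \<alpha> r = - snd gf - alg_lambda gf gh \<alpha> r *\<^sub>R snd gh"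

end

theory Submission imports Defs begin


lemma descent:
  fixes F :: "'c::real_inner \<Rightarrow> real"
  assumes der: "\<And>p. (F has_derivative (\<lambda>v. DF p \<bullet> v)) (at p)"
    and lip: "\<And>p q. norm (DF p - DF q) \<le> L * norm (p - q)"
  shows "F (p + v) \<le> F p + DF p \<bullet> v + L / 2 * (norm v)\<^sup>2"
proof -
  define \<psi> where "\<psi> t = F (p + t *\<^sub>R v) - t * (DF p \<bullet> v) - L / 2 * t\<^sup>2 * (norm v)\<^sup>2" for t
  define d where "d t = DF (p + t *\<^sub>R v) \<bullet> v - DF p \<bullet> v - L * t * (norm v)\<^sup>2" for t
  have D: "DERIV \<psi> t :> d t" for t
  proof -
    have l: "((\<lambda>t. p + t *\<^sub>R v) has_derivative (\<lambda>s. s *\<^sub>R v)) (at t)"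
      by (auto intro!: derivative_eq_intros)
    have "((\<lambda>t. F (p + t *\<^sub>R v)) has_derivative (\<lambda>s. DF (p + t *\<^sub>R v) \<bullet> (s *\<^sub>R v))) (at t)"
      using has_derivative_compose[OF l der] .
    then have "((\<lambda>t. F (p + t *\<^sub>R v)) has_real_derivative (DF (p + t *\<^sub>R v) \<bullet> v)) (at t)"
      by (rule has_derivative_imp_has_field_derivative) simp
    then show ?thesis unfolding \<psi>_def d_def
      by (auto intro!: derivative_eq_intros simp: power2_eq_square)
  qed
  obtain z where z: "0 < z" "z < 1" "\<psi> 1 - \<psi> 0 = (1 - 0) * d z"
    using MVT2[of 0 1 \<psi> d] D by auto
  have "(DF (p + z *\<^sub>R v) - DF p) \<bullet> v \<le> norm (DF (p + z *\<^sub>R v) - DF p) * norm v"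
    by (rule norm_cauchy_schwarz)
  also have "\<dots> \<le> L * norm (z *\<^sub>R v) * norm v"
    using lip[of "p + z *\<^sub>R v" p] by (simp add: mult_right_mono)
  also have "\<dots> = L * z * (norm v)\<^sup>2" using z by (simp add: power2_eq_square)
  finally have "d z \<le> 0" unfolding d_def by (simp add: inner_diff_left)
  then show ?thesis using z unfolding \<psi>_def by simp
qed


lemma normP2: "(norm (a, b))\<^sup>2 = (norm a)\<^sup>2 + (norm b)\<^sup>2"
  by (simp add: norm_Pair)

lemma step_facts:
  fixes G A :: "'a::euclidean_space \<times> 'b::euclidean_space"
  assumes al: "\<alpha> > 0"
  defines "lam \<equiv> alg_lambda G A \<alpha> ((norm A)\<^sup>2)"
  defines "D \<equiv> (alg_dx G A \<alpha> ((norm A)\<^sup>2), alg_dy G A \<alpha> ((norm A)\<^sup>2))"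
  shows "D = - G - lam *\<^sub>R A" "A \<bullet> D \<le> - \<alpha> * (norm A)\<^sup>2"
    "(\<alpha> - lam) * (A \<bullet> D) \<le> \<alpha> * norm A * norm G"
proof -
  show DD: "D = - G - lam *\<^sub>R A"
    unfolding D_def alg_dx_def alg_dy_def lam_def by (simp add: prod_eq_iff)
  have ip: "fst A \<bullet> fst G + snd A \<bullet> snd G = A \<bullet> G" by (simp add: inner_prod_def)
  have nA: "(norm (fst A))\<^sup>2 + (norm (snd A))\<^sup>2 = (norm A)\<^sup>2"
    using normP2[of "fst A" "snd A"] by simp
  have AD: "A \<bullet> D = - (A \<bullet> G) - lam * (norm A)\<^sup>2"
    unfolding DD by (simp add: inner_diff_right power2_norm_eq_inner)
  have cs: "- (A \<bullet> G) \<le> norm A * norm G"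
    using norm_cauchy_schwarz[of "-A" G] by simp
  have "A \<bullet> D \<le> - \<alpha> * (norm A)\<^sup>2 \<and> (\<alpha> - lam) * (A \<bullet> D) \<le> \<alpha> * norm A * norm G"
  proof (cases "A = 0")
    case True
    then show ?thesis using al by (simp add: AD)
  next
    case False
    then have pos: "(norm A)\<^sup>2 > 0" by simp
    have lam_eq: "lam = max 0 (- (A \<bullet> G) + \<alpha> * (norm A)\<^sup>2) / (norm A)\<^sup>2"
      unfolding lam_def alg_lambda_def using False ip nA by simp
    show ?thesis
    proof (cases "- (A \<bullet> G) + \<alpha> * (norm A)\<^sup>2 \<ge> 0")
      case True
      then have "lam * (norm A)\<^sup>2 = - (A \<bullet> G) + \<alpha> * (norm A)\<^sup>2"
        using lam_eq pos by simp
      then have e: "A \<bullet> D = - \<alpha> * (norm A)\<^sup>2" using AD by simp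
      have "(\<alpha> - lam) * (A \<bullet> D) = \<alpha> * (lam * (norm A)\<^sup>2 - \<alpha> * (norm A)\<^sup>2)"
        unfolding e by (simp add: algebra_simps)
      also have "\<dots> = \<alpha> * (- (A \<bullet> G))" using \<open>lam * (norm A)\<^sup>2 = _\<close> by simp
      also have "\<dots> \<le> \<alpha> * (norm A * norm G)" using cs al by (intro mult_left_mono) auto
      finally show ?thesis using e by simp
    next
      case False
      then have "lam = 0" using lam_eq by simp
      have m: "\<alpha> * (- (A \<bullet> G)) \<le> \<alpha> * (norm A * norm G)" using cs al by (intro mult_left_mono) auto
      show ?thesis using AD False \<open>lam = 0\<close> m al by (simp add: algebra_simps)
    qed
  qed
  then show "A \<bullet> D \<le> - \<alpha> * (norm A)\<^sup>2" "(\<alpha> - lam) * (A \<bullet> D) \<le> \<alpha> * norm A * norm G" by auto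
qed


theorem theorem1:
  fixes f g h :: "'a::euclidean_space \<times> 'b::euclidean_space \<Rightarrow> real"
    and Df Dg Dh :: "'a \<times> 'b \<Rightarrow> 'a \<times> 'b"
    and D2g :: "'a \<times> 'b \<Rightarrow> ('a \<times> 'b) \<Rightarrow>\<^sub>L ('a \<times> 'b)"
    and rho :: "'a \<times> 'b \<Rightarrow> real"
    and Lf Lh Cf \<alpha> \<gamma> C0 :: real
    and x0 :: 'a and y0 :: 'b
    and xs :: "nat \<Rightarrow> 'a" and ys :: "nat \<Rightarrow> 'b"
    and K :: nat
  assumes f_grad: "\<And>p. (f has_derivative (\<lambda>v. Df p \<bullet> v)) (at p)"
    and f_bdd: "bdd_below (range f)"
    and f_lip: "\<And>p q. norm (Df p - Df q) \<le> Lf * norm (p - q)"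
    and f_bound: "\<And>p. norm (Df p) \<le> Cf"
    and g_grad: "\<And>p. (g has_derivative (\<lambda>v. Dg p \<bullet> v)) (at p)"
    and g_hess: "\<And>p. (Dg has_derivative blinfun_apply (D2g p)) (at p)"
    and g_C2: "continuous_on UNIV D2g"
    and h_def: "\<And>p. h p = (norm (snd (Dg p)))\<^sup>2"
    and h_grad: "\<And>p. (h has_derivative (\<lambda>v. Dh p \<bullet> v)) (at p)"
    and h_lip: "\<And>p q. norm (Dh p - Dh q) \<le> Lh * norm (p - q)"
    and Lh_pos: "Lh > 0"
    and rho_def: "\<And>p. rho p = (norm (Dh p))\<^sup>2"
    and alpha_pos: "\<alpha> > 0"
    and C0_pos: "C0 > 0"
    and h0: "h (x0, y0) \<le> \<alpha>\<^sup>2 * C0"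
    and gamma_pos: "\<gamma> > 0"
    and gamma_le: "\<gamma> \<le> min \<alpha> (1 / (Lf + \<alpha> * Lh))"
    and init_x: "xs 0 = x0" and init_y: "ys 0 = y0"
    and step_x: "\<And>k. xs (Suc k) = xs k + \<gamma> *\<^sub>R
        alg_dx (Df (xs k, ys k)) (Dh (xs k, ys k)) \<alpha> (rho (xs k, ys k))"
    and step_y: "\<And>k. ys (Suc k) = ys k + \<gamma> *\<^sub>R
        alg_dy (Df (xs k, ys k)) (Dh (xs k, ys k)) \<alpha> (rho (xs k, ys k))"
    and K_ge: "K \<ge> 1"
  shows "((1 / real K) * (\<Sum>k<K.
            (norm (alg_dx (Df (xs k, ys k)) (Dh (xs k, ys k)) \<alpha> (rho (xs k, ys k))))\<^sup>2
          + (norm (alg_dy (Df (xs k, ys k)) (Dh (xs k, ys k)) \<alpha> (rho (xs k, ys k))))\<^sup>2)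
         \<le> 4 * (f (x0, y0) + \<alpha> ^ 3 * C0 - Inf (range f)) / (\<gamma> * real K)
           + 2 * \<alpha> * C0 / (\<gamma> * Lh * real K) + 2 * \<alpha>\<^sup>2 * Lh * Cf\<^sup>2)
       \<and> ((1 / real K) * (\<Sum>k<K.
            (norm (fst (Dh (xs k, ys k))))\<^sup>2 + (norm (snd (Dh (xs k, ys k))))\<^sup>2)
         \<le> 2 * \<alpha> * C0 / (\<gamma> * real K)
           + 2 * Lh * (f (x0, y0) + \<alpha> ^ 3 * C0 - Inf (range f)) / (\<gamma> * real K)
           + \<alpha>\<^sup>2 * Lh\<^sup>2 * Cf\<^sup>2)"
  proof -
  define P where "P k = (xs k, ys k)" for k
  define G where "G k = Df (P k)" for k
  define A where "A k = Dh (P k)" for k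
  define lam where "lam k = alg_lambda (G k) (A k) \<alpha> ((norm (A k))\<^sup>2)" for k
  define D where "D k = (alg_dx (G k) (A k) \<alpha> ((norm (A k))\<^sup>2), alg_dy (G k) (A k) \<alpha> ((norm (A k))\<^sup>2))" for k
  define nD where "nD k = (norm (D k))\<^sup>2" for k
  define fb where "fb = Inf (range f)"
  have rhoP: "rho (P k) = (norm (A k))\<^sup>2" for k using rho_def A_def by simp
  have PS: "P (Suc k) = P k + \<gamma> *\<^sub>R D k" for k
    unfolding P_def D_def G_def A_def rhoP[unfolded P_def A_def, symmetric]
    using step_x step_y by simp
  have Cf0: "Cf \<ge> 0" using f_bound[of 0] norm_ge_zero[of "Df 0"] by linarith
  have LL: "(Lf + \<alpha> * Lh) * \<gamma> \<le> 1"
  proof -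
    have "\<gamma> \<le> 1 / (Lf + \<alpha> * Lh)" using gamma_le by simp
    have "Lf + \<alpha> * Lh > 0"
    proof (rule ccontr)
      assume "\<not> Lf + \<alpha> * Lh > 0"
      then have "1 / (Lf + \<alpha> * Lh) \<le> 0" by simp
      then show False using \<open>\<gamma> \<le> 1 / (Lf + \<alpha> * Lh)\<close> gamma_pos by linarith
    qed
    then show ?thesis using \<open>\<gamma> \<le> 1 / (Lf + \<alpha> * Lh)\<close> by (simp add: field_simps)
  qed
  have ga: "\<gamma> \<le> \<alpha>" using gamma_le by simp
  have hnn: "h p \<ge> 0" for p using h_def by simp
  define c where "c = 1 / (2 * Lh * \<alpha>)"
  have c_pos: "c > 0" using Lh_pos alpha_pos by (simp add: c_def)
  define \<Psi> where "\<Psi> k = f (P k) + \<alpha> * h (P k) + c * h (P k)" for k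
  define E where "E = \<gamma> * \<alpha>\<^sup>2 * Lh * Cf\<^sup>2 / 2"
  have hstep: "h (P (Suc k)) \<le> h (P k) + \<gamma> * (A k \<bullet> D k) + Lh / 2 * \<gamma>\<^sup>2 * nD k" for k
  proof -
    have "h (P k + \<gamma> *\<^sub>R D k) \<le> h (P k) + Dh (P k) \<bullet> (\<gamma> *\<^sub>R D k) + Lh / 2 * (norm (\<gamma> *\<^sub>R D k))\<^sup>2"
      by (rule descent[OF h_grad h_lip])
    then show ?thesis using gamma_pos unfolding PS A_def nD_def by (simp add: power_mult_distrib)
  qed
  have fstep: "f (P (Suc k)) \<le> f (P k) + \<gamma> * (G k \<bullet> D k) + Lf / 2 * \<gamma>\<^sup>2 * nD k" for k
  proof -
    have "f (P k + \<gamma> *\<^sub>R D k) \<le> f (P k) + Df (P k) \<bullet> (\<gamma> *\<^sub>R D k) + Lf / 2 * (norm (\<gamma> *\<^sub>R D k))\<^sup>2"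
      by (rule descent[OF f_grad f_lip])
    then show ?thesis using gamma_pos unfolding PS G_def nD_def by (simp add: power_mult_distrib)
  qed
  have sf: "D k = - G k - lam k *\<^sub>R A k" "A k \<bullet> D k \<le> - \<alpha> * (norm (A k))\<^sup>2"
    "(\<alpha> - lam k) * (A k \<bullet> D k) \<le> \<alpha> * norm (A k) * norm (G k)" for k
    using step_facts[OF alpha_pos, where G="G k" and A="A k"] unfolding lam_def D_def by auto
  have Psi_step: "\<Psi> (Suc k) + \<gamma> / 4 * nD k \<le> \<Psi> k + E" for k
  proof -
    define x where "x = A k \<bullet> D k"
    define y where "y = G k \<bullet> D k"
    define a where "a = norm (A k)"
    have x1: "x \<le> - \<alpha> * a\<^sup>2" using sf(2) unfolding x_def a_def .
    have yv: "y = - nD k - lam k * x"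
    proof -
      have Gv: "G k = - D k - lam k *\<^sub>R A k" by (simp add: sf(1)[of k])
      show ?thesis unfolding y_def x_def nD_def Gv
        by (simp add: inner_diff_left inner_diff_right power2_norm_eq_inner inner_commute)
    qed
    have x2: "(\<alpha> - lam k) * x \<le> \<alpha> * a * Cf"
    proof -
      have "\<alpha> * a * norm (G k) \<le> \<alpha> * a * Cf" using f_bound[of "P k"] alpha_pos
        unfolding G_def a_def by (intro mult_left_mono) auto
      then show ?thesis using sf(3)[of k] unfolding x_def a_def by linarith
    qed
    have yx: "y + \<alpha> * x \<le> - nD k + \<alpha> * a * Cf" using yv x2 by (simp add: algebra_simps)
    have nD0: "nD k \<ge> 0" unfolding nD_def by simp
    have t1: "(Lf + \<alpha> * Lh) * \<gamma> * (\<gamma> * nD k) \<le> \<gamma> * nD k"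
      using LL mult_right_mono[OF LL, of "\<gamma> * nD k"] nD0 gamma_pos by simp
    have t2: "\<gamma> * (y + \<alpha> * x) \<le> \<gamma> * (- nD k + \<alpha> * a * Cf)"
      using yx gamma_pos by (intro mult_left_mono) auto
    have t3: "c * (\<gamma> * x) \<le> c * (\<gamma> * (- \<alpha> * a\<^sup>2))"
      using x1 gamma_pos c_pos by (intro mult_left_mono) auto
    have t3': "c * (\<gamma> * (- \<alpha> * a\<^sup>2)) = - \<gamma> * a\<^sup>2 / (2 * Lh)"
      using alpha_pos by (simp add: c_def field_simps)
    have t4: "c * (Lh / 2 * \<gamma>\<^sup>2 * nD k) = \<gamma> * (\<gamma> / (4 * \<alpha>)) * nD k"
      using alpha_pos Lh_pos by (simp add: c_def field_simps power2_eq_square)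
    have t5: "\<gamma> * (\<gamma> / (4 * \<alpha>)) * nD k \<le> \<gamma> * (1/4) * nD k"
      using ga gamma_pos alpha_pos nD0 by (intro mult_right_mono mult_left_mono) (auto simp: field_simps)
    have young: "\<alpha> * a * Cf \<le> a\<^sup>2 / (2 * Lh) + \<alpha>\<^sup>2 * Lh * Cf\<^sup>2 / 2"
    proof -
      have "0 \<le> (a - \<alpha> * Lh * Cf)\<^sup>2" by simp
      then have "2 * Lh * (\<alpha> * a * Cf) \<le> a\<^sup>2 + (\<alpha> * Lh * Cf)\<^sup>2"
        by (simp add: power2_eq_square algebra_simps)
      then show ?thesis using Lh_pos by (simp add: field_simps power2_eq_square)
    qed
    have t6: "\<gamma> * (\<alpha> * a * Cf) \<le> \<gamma> * (a\<^sup>2 / (2 * Lh) + \<alpha>\<^sup>2 * Lh * Cf\<^sup>2 / 2)"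
      using young gamma_pos by (intro mult_left_mono) auto
    have hs: "h (P (Suc k)) \<le> h (P k) + \<gamma> * x + Lh / 2 * \<gamma>\<^sup>2 * nD k" using hstep x_def by simp
    have hs2: "c * h (P (Suc k)) \<le> c * h (P k) + c * (\<gamma> * x) + c * (Lh / 2 * \<gamma>\<^sup>2 * nD k)"
      using mult_left_mono[OF hs, of c] c_pos by (simp add: algebra_simps)
    have hs3: "\<alpha> * h (P (Suc k)) \<le> \<alpha> * h (P k) + \<alpha> * (\<gamma> * x) + \<alpha> * (Lh / 2 * \<gamma>\<^sup>2 * nD k)"
      using mult_left_mono[OF hs, of \<alpha>] alpha_pos by (simp add: algebra_simps)
    have fs: "f (P (Suc k)) \<le> f (P k) + \<gamma> * y + Lf / 2 * \<gamma>\<^sup>2 * nD k" using fstep y_def by simp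
    have e1: "\<gamma> * y + \<alpha> * (\<gamma> * x) = \<gamma> * (y + \<alpha> * x)" by (simp add: algebra_simps)
    have e2: "Lf / 2 * \<gamma>\<^sup>2 * nD k + \<alpha> * (Lh / 2 * \<gamma>\<^sup>2 * nD k) = (Lf + \<alpha> * Lh) * \<gamma> * (\<gamma> * nD k) / 2"
      by (simp add: algebra_simps power2_eq_square)
    have e3: "\<gamma> * (a\<^sup>2 / (2 * Lh) + \<alpha>\<^sup>2 * Lh * Cf\<^sup>2 / 2) = \<gamma> * a\<^sup>2 / (2 * Lh) + E"
      unfolding E_def by (simp add: algebra_simps)
    show ?thesis unfolding \<Psi>_def
      using fs hs2 hs3 e1 e2 e3 t1 t2 t3 t3' t4 t5 t6 by (simp add: algebra_simps)
  qed
  have tele: "\<Psi> n + \<gamma> / 4 * (\<Sum>k<n. nD k) \<le> \<Psi> 0 + real n * E" for n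
  proof (induction n)
    case 0 then show ?case by simp
  next
    case (Suc n)
    then show ?case using Psi_step[of n] by (simp add: algebra_simps)
  qed
  have hstep2: "h (P (Suc k)) + \<gamma> * \<alpha> * (norm (A k))\<^sup>2 \<le> h (P k) + Lh / 2 * \<gamma>\<^sup>2 * nD k" for k
  proof -
    have "\<gamma> * (A k \<bullet> D k) \<le> \<gamma> * (- \<alpha> * (norm (A k))\<^sup>2)" using sf(2) gamma_pos by (intro mult_left_mono) auto
    then show ?thesis using hstep[of k] by simp
  qed
  have teleh: "h (P n) + \<gamma> * \<alpha> * (\<Sum>k<n. (norm (A k))\<^sup>2) \<le> h (P 0) + Lh / 2 * \<gamma>\<^sup>2 * (\<Sum>k<n. nD k)" for n
  proof (induction n)
    case 0 then show ?case by simp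
  next
    case (Suc n)
    then show ?case unfolding sum.lessThan_Suc ring_distribs using hstep2[of n] by linarith
  qed
  have fb_le: "fb \<le> f p" for p unfolding fb_def using f_bdd by (simp add: cInf_lower)
  define S1 where "S1 = (\<Sum>k<K. nD k)"
  define S2 where "S2 = (\<Sum>k<K. (norm (A k))\<^sup>2)"
  define M where "M = f (x0, y0) + \<alpha> ^ 3 * C0 - fb"
  have P0: "P 0 = (x0, y0)" using init_x init_y P_def by simp
  have M0: "M \<ge> 0" unfolding M_def using fb_le[of "(x0,y0)"] alpha_pos C0_pos
    by (smt (verit) mult_pos_pos zero_less_power)
  have h0': "h (P 0) \<le> \<alpha>\<^sup>2 * C0" using h0 P0 by simp
  have Psi0: "\<Psi> 0 \<le> f (x0, y0) + \<alpha> ^ 3 * C0 + \<alpha> * C0 / (2 * Lh)"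
  proof -
    have "(\<alpha> + c) * h (P 0) \<le> (\<alpha> + c) * (\<alpha>\<^sup>2 * C0)" using h0' alpha_pos c_pos by (intro mult_left_mono) auto
    also have "\<dots> = \<alpha> ^ 3 * C0 + \<alpha> * C0 / (2 * Lh)" using alpha_pos Lh_pos
      by (simp add: c_def field_simps power2_eq_square power3_eq_cube)
    finally show ?thesis unfolding \<Psi>_def P0 by (simp add: algebra_simps)
  qed
  have PsiK: "\<Psi> K \<ge> fb" unfolding \<Psi>_def using fb_le[of "P K"] hnn[of "P K"] alpha_pos c_pos
    by (smt (verit) mult_nonneg_nonneg)
  have S1b: "\<gamma> / 4 * S1 \<le> M + \<alpha> * C0 / (2 * Lh) + real K * E"
    using tele[of K] Psi0 PsiK unfolding S1_def M_def by linarith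
  have S1c: "S1 \<le> 4 * M / \<gamma> + 2 * \<alpha> * C0 / (\<gamma> * Lh) + real K * (2 * \<alpha>\<^sup>2 * Lh * Cf\<^sup>2)"
  proof -
    have "S1 \<le> (4 / \<gamma>) * (M + \<alpha> * C0 / (2 * Lh) + real K * E)"
      using S1b gamma_pos by (simp add: field_simps)
    also have "\<dots> = 4 * M / \<gamma> + 2 * \<alpha> * C0 / (\<gamma> * Lh) + real K * (2 * \<alpha>\<^sup>2 * Lh * Cf\<^sup>2)"
      using gamma_pos Lh_pos unfolding E_def by (simp add: field_simps)
    finally show ?thesis .
  qed
  have Kp: "real K > 0" using K_ge by simp
  have goal1: "(1 / real K) * S1 \<le> 4 * M / (\<gamma> * real K) + 2 * \<alpha> * C0 / (\<gamma> * Lh * real K) + 2 * \<alpha>\<^sup>2 * Lh * Cf\<^sup>2"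
  proof -
    have "(1 / real K) * S1 \<le> (1 / real K) * (4 * M / \<gamma> + 2 * \<alpha> * C0 / (\<gamma> * Lh) + real K * (2 * \<alpha>\<^sup>2 * Lh * Cf\<^sup>2))"
      using S1c Kp by (intro mult_left_mono) auto
    also have "\<dots> = 4 * M / (\<gamma> * real K) + 2 * \<alpha> * C0 / (\<gamma> * Lh * real K) + 2 * \<alpha>\<^sup>2 * Lh * Cf\<^sup>2"
      using Kp by (simp add: field_simps)
    finally show ?thesis .
  qed
  have S2a: "\<gamma> * \<alpha> * S2 \<le> \<alpha>\<^sup>2 * C0 + Lh / 2 * \<gamma>\<^sup>2 * S1"
    using teleh[of K] h0' hnn[of "P K"] unfolding S1_def S2_def by linarith
  have S2b: "S2 \<le> \<alpha> * C0 / \<gamma> + Lh * \<gamma> / (2 * \<alpha>) * S1"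
  proof -
    have "S2 = (\<gamma> * \<alpha> * S2) / (\<gamma> * \<alpha>)" using gamma_pos alpha_pos by simp
    also have "\<dots> \<le> (\<alpha>\<^sup>2 * C0 + Lh / 2 * \<gamma>\<^sup>2 * S1) / (\<gamma> * \<alpha>)"
      using S2a gamma_pos alpha_pos by (intro divide_right_mono) auto
    also have "\<dots> = \<alpha> * C0 / \<gamma> + Lh * \<gamma> / (2 * \<alpha>) * S1"
      using gamma_pos alpha_pos by (simp add: field_simps power2_eq_square)
    finally show ?thesis .
  qed
  have S2c: "Lh * \<gamma> / (2 * \<alpha>) * S1 \<le> Lh * \<gamma> / (2 * \<alpha>) * (4 * M / \<gamma> + 2 * \<alpha> * C0 / (\<gamma> * Lh) + real K * (2 * \<alpha>\<^sup>2 * Lh * Cf\<^sup>2))"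
    using S1c gamma_pos alpha_pos Lh_pos by (intro mult_left_mono) auto
  have S2d: "Lh * \<gamma> / (2 * \<alpha>) * (4 * M / \<gamma> + 2 * \<alpha> * C0 / (\<gamma> * Lh) + real K * (2 * \<alpha>\<^sup>2 * Lh * Cf\<^sup>2))
      = 2 * Lh * M / \<alpha> + C0 + real K * (\<gamma> * \<alpha> * Lh\<^sup>2 * Cf\<^sup>2)"
    using gamma_pos alpha_pos Lh_pos by (simp add: field_simps power2_eq_square)
  have u1: "2 * Lh * M / \<alpha> \<le> 2 * Lh * M / \<gamma>"
    using M0 Lh_pos gamma_pos ga by (intro divide_left_mono) auto
  have u2: "C0 \<le> \<alpha> * C0 / \<gamma>" using C0_pos gamma_pos ga by (simp add: field_simps)
  have u3: "real K * (\<gamma> * \<alpha> * Lh\<^sup>2 * Cf\<^sup>2) \<le> real K * (\<alpha>\<^sup>2 * Lh\<^sup>2 * Cf\<^sup>2)"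
    using Kp ga gamma_pos alpha_pos by (intro mult_left_mono mult_right_mono) (auto simp: power2_eq_square)
  have S2e: "S2 \<le> 2 * \<alpha> * C0 / \<gamma> + 2 * Lh * M / \<gamma> + real K * (\<alpha>\<^sup>2 * Lh\<^sup>2 * Cf\<^sup>2)"
  proof -
    have "2 * \<alpha> * C0 / \<gamma> = \<alpha> * C0 / \<gamma> + \<alpha> * C0 / \<gamma>" by (simp add: field_simps)
    then show ?thesis using S2b S2c S2d u1 u2 u3 by argo
  qed
  have goal2: "(1 / real K) * S2 \<le> 2 * \<alpha> * C0 / (\<gamma> * real K) + 2 * Lh * M / (\<gamma> * real K) + \<alpha>\<^sup>2 * Lh\<^sup>2 * Cf\<^sup>2"
  proof -
    have "(1 / real K) * S2 \<le> (1 / real K) * (2 * \<alpha> * C0 / \<gamma> + 2 * Lh * M / \<gamma> + real K * (\<alpha>\<^sup>2 * Lh\<^sup>2 * Cf\<^sup>2))"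
      using S2e Kp by (intro mult_left_mono) auto
    also have "\<dots> = 2 * \<alpha> * C0 / (\<gamma> * real K) + 2 * Lh * M / (\<gamma> * real K) + \<alpha>\<^sup>2 * Lh\<^sup>2 * Cf\<^sup>2"
      using Kp by (simp add: field_simps)
    finally show ?thesis .
  qed
  have eqS1: "(\<Sum>k<K. (norm (alg_dx (Df (xs k, ys k)) (Dh (xs k, ys k)) \<alpha> (rho (xs k, ys k))))\<^sup>2
          + (norm (alg_dy (Df (xs k, ys k)) (Dh (xs k, ys k)) \<alpha> (rho (xs k, ys k))))\<^sup>2) = S1"
    unfolding S1_def nD_def D_def normP2 using rhoP by (simp add: P_def G_def A_def)
  have eqS2: "(\<Sum>k<K. (norm (fst (Dh (xs k, ys k))))\<^sup>2 + (norm (snd (Dh (xs k, ys k))))\<^sup>2) = S2"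
    unfolding S2_def A_def P_def by (simp add: normP2[symmetric])
  show ?thesis unfolding eqS1 eqS2 using goal1 goal2 unfolding M_def fb_def by simp
qed

end
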